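(* Let $M$ be a right $R$-module and consider: (i) $M$ is $M$-coherent; (ii) the intersection of any two finitely $M$-generated submodules of $M$ is finitely $M$-generated, and $\ker\varphi$ is finitely $M$-generated for every $\varphi\in\mathrm{End}_R(M)$. Then (i)$\Rightarrow$(ii). If moreover $M$ is intrinsically projective, then (i) and (ii) are equivalent.
   Context: $M^{(n)}$ denotes the direct sum of $n$ copies of $M$. A module $N$ is finitely $M$-generated if there is an epimorphism $M^{(n)}\to N$ for some $n>0$. A finitely $M$-generated module $N$ is $M$-coherent if for every $n>0$ and every homomorphism $\rho:M^{(n)}\to N$, $\ker\rho$ is finitely $M$-generated. $M$ is intrinsically projective if for every integer $n>0$, every submodule $N\le M$, every epimorphism $\alpha:M^{(n)}\to N$ and every homomorphism $\beta:M\to N$, there exists $\gamma:M\to M^{(n)}$ with $\alpha\gamma=\beta$. *)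

theory Defs
  imports Main "HOL-Library.Function_Algebras"
begin

text \<open>Right R-modules over a ring R (the type 'r), realised as a carrier set A inside
an ambient abelian group type 'a together with a right action s x r = x r.\<close>

definition is_rmod :: "'a::ab_group_add set \<Rightarrow> ('a \<Rightarrow> 'r::ring_1 \<Rightarrow> 'a) \<Rightarrow> bool" where
  "is_rmod A s \<longleftrightarrow> 0 \<in> A \<and> (\<forall>x\<in>A. \<forall>y\<in>A. x + y \<in> A) \<and> (\<forall>x\<in>A. - x \<in> A)
     \<and> (\<forall>x\<in>A. \<forall>r. s x r \<in> A)
     \<and> (\<forall>x\<in>A. \<forall>y\<in>A. \<forall>r. s (x + y) r = s x r + s y r)
     \<and> (\<forall>x\<in>A. \<forall>r q. s x (r + q) = s x r + s x q)
     \<and> (\<forall>x\<in>A. \<forall>r q. s x (r * q) = s (s x r) q)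
     \<and> (\<forall>x\<in>A. s x 1 = x)"

definition submod :: "'a::ab_group_add set \<Rightarrow> 'a set \<Rightarrow> ('a \<Rightarrow> 'r::ring_1 \<Rightarrow> 'a) \<Rightarrow> bool" where
  "submod N A s \<longleftrightarrow> N \<subseteq> A \<and> is_rmod N s"

definition rhom :: "'a::ab_group_add set \<Rightarrow> ('a \<Rightarrow> 'r::ring_1 \<Rightarrow> 'a)
    \<Rightarrow> 'b::ab_group_add set \<Rightarrow> ('b \<Rightarrow> 'r \<Rightarrow> 'b) \<Rightarrow> ('a \<Rightarrow> 'b) \<Rightarrow> bool" where
  "rhom A s B t f \<longleftrightarrow> (\<forall>x\<in>A. f x \<in> B) \<and> (\<forall>x\<in>A. \<forall>y\<in>A. f (x + y) = f x + f y)
     \<and> (\<forall>x\<in>A. \<forall>r. f (s x r) = t (f x) r)"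

text \<open>The direct sum M^(n) of n copies of M: tuples indexed by {0..<n}, zero elsewhere.\<close>
definition dsum :: "nat \<Rightarrow> 'a::ab_group_add set \<Rightarrow> (nat \<Rightarrow> 'a) set" where
  "dsum n A = {f. (\<forall>i<n. f i \<in> A) \<and> (\<forall>i\<ge>n. f i = 0)}"

definition dact :: "('a \<Rightarrow> 'r \<Rightarrow> 'a) \<Rightarrow> (nat \<Rightarrow> 'a) \<Rightarrow> 'r \<Rightarrow> (nat \<Rightarrow> 'a)" where
  "dact s f r = (\<lambda>i. s (f i) r)"

definition fin_gen :: "'m::ab_group_add set \<Rightarrow> ('m \<Rightarrow> 'r::ring_1 \<Rightarrow> 'm)
    \<Rightarrow> 'b::ab_group_add set \<Rightarrow> ('b \<Rightarrow> 'r \<Rightarrow> 'b) \<Rightarrow> bool" where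
  "fin_gen A s B t \<longleftrightarrow>
     (\<exists>n>0. \<exists>f. rhom (dsum n A) (dact s) B t f \<and> f ` dsum n A = B)"

definition coherent :: "'m::ab_group_add set \<Rightarrow> ('m \<Rightarrow> 'r::ring_1 \<Rightarrow> 'm)
    \<Rightarrow> 'b::ab_group_add set \<Rightarrow> ('b \<Rightarrow> 'r \<Rightarrow> 'b) \<Rightarrow> bool" where
  "coherent A s B t \<longleftrightarrow> fin_gen A s B t \<and>
     (\<forall>n>0. \<forall>\<rho>. rhom (dsum n A) (dact s) B t \<rho> \<longrightarrow>
        fin_gen A s {x \<in> dsum n A. \<rho> x = 0} (dact s))"

definition intr_proj :: "'m::ab_group_add set \<Rightarrow> ('m \<Rightarrow> 'r::ring_1 \<Rightarrow> 'm) \<Rightarrow> bool" where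
  "intr_proj A s \<longleftrightarrow>
     (\<forall>n>0. \<forall>N \<alpha> \<beta>. submod N A s \<and> rhom (dsum n A) (dact s) N s \<alpha> \<and> \<alpha> ` dsum n A = N
        \<and> rhom A s N s \<beta> \<longrightarrow>
        (\<exists>\<gamma>. rhom A s (dsum n A) (dact s) \<gamma> \<and> (\<forall>x\<in>A. \<alpha> (\<gamma> x) = \<beta> x)))"

end

theory Submission
  imports Defs
begin

lemma rmod_zero_act: "is_rmod A s \<Longrightarrow> s 0 r = 0"
proof -
  assume M: "is_rmod A s"
  hence "0 \<in> A" "\<forall>x\<in>A. \<forall>y\<in>A. \<forall>r. s (x + y) r = s x r + s y r" unfolding is_rmod_def by auto
  hence "s (0+0) r = s 0 r + s 0 r" by blast
  thus ?thesis by simp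
qed

lemma rmod_closed:
  assumes "is_rmod A s"
  shows "0 \<in> A" "x \<in> A \<Longrightarrow> y \<in> A \<Longrightarrow> x + y \<in> A" "x \<in> A \<Longrightarrow> - x \<in> A"
    "x \<in> A \<Longrightarrow> s x r \<in> A" "x \<in> A \<Longrightarrow> y \<in> A \<Longrightarrow> s (x + y) r = s x r + s y r"
  using assms unfolding is_rmod_def by auto

lemma rmod_diff: "is_rmod A s \<Longrightarrow> x \<in> A \<Longrightarrow> y \<in> A \<Longrightarrow> x - y \<in> A"
  unfolding diff_conv_add_uminus using rmod_closed(2,3)[of A s] by blast

lemma rmod_neg_act: assumes M: "is_rmod A s" and x: "x \<in> A" shows "s (- x) r = - s x r"
proof -
  have "s (x + - x) r = s x r + s (-x) r" using rmod_closed(5)[OF M x rmod_closed(3)[OF M x]] .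
  hence "s x r + s (-x) r = 0" using rmod_zero_act[OF M, of r] by simp
  thus ?thesis by (rule add.inverse_unique[symmetric])
qed

lemma dsum_in: "x \<in> dsum n A \<Longrightarrow> 0 \<in> A \<Longrightarrow> x i \<in> A"
  unfolding dsum_def by (cases "i < n") auto

lemma dsum_rmod: assumes M: "is_rmod A s" shows "is_rmod (dsum n A) (dact s)"
proof -
  have z: "0 \<in> A" using M unfolding is_rmod_def by auto
  note C = rmod_closed[OF M]
  have P: "\<forall>x\<in>A. \<forall>y\<in>A. \<forall>r. s (x + y) r = s x r + s y r"
     "\<forall>x\<in>A. \<forall>r q. s x (r + q) = s x r + s x q"
     "\<forall>x\<in>A. \<forall>r q. s x (r * q) = s (s x r) q"
     "\<forall>x\<in>A. s x 1 = x" using M unfolding is_rmod_def by blast+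
  have in_: "x i \<in> A" if "x \<in> dsum n A" for x i using dsum_in[OF that z] .
  show ?thesis unfolding is_rmod_def
  proof (intro conjI ballI allI)
    show "0 \<in> dsum n A" unfolding dsum_def using z by simp
  next
    fix x y assume x: "x \<in> dsum n A" and y: "y \<in> dsum n A"
    show "x + y \<in> dsum n A" using x y C(2) unfolding dsum_def by auto
    fix r show "dact s (x + y) r = dact s x r + dact s y r"
      unfolding dact_def using in_[OF x] in_[OF y] P(1) by (simp add: fun_eq_iff)
  next
    fix x assume x: "x \<in> dsum n A"
    show "- x \<in> dsum n A" using x C(3) unfolding dsum_def by auto
    show "dact s x 1 = x" unfolding dact_def using in_[OF x] P(4) by (simp add: fun_eq_iff)
    fix r show "dact s x r \<in> dsum n A" using x C(4) rmod_zero_act[OF M] unfolding dsum_def dact_def by auto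
    fix q
    show "dact s x (r + q) = dact s x r + dact s x q"
      unfolding dact_def using in_[OF x] P(2) by (simp add: fun_eq_iff)
    show "dact s x (r * q) = dact s (dact s x r) q"
      unfolding dact_def using in_[OF x] P(3) by (simp add: fun_eq_iff)
  qed
qed

lemma dsum_0: "dsum 0 A = {0}"
  unfolding dsum_def by auto

lemma dsum_mono: "0 \<in> A \<Longrightarrow> dsum n A \<subseteq> dsum (Suc n) A"
  unfolding dsum_def by (auto simp: less_Suc_eq)

lemma rhom_add_app: "rhom A s B t f \<Longrightarrow> x \<in> A \<Longrightarrow> y \<in> A \<Longrightarrow> f (x + y) = f x + f y"
  unfolding rhom_def by blast
lemma rhom_in: "rhom A s B t f \<Longrightarrow> x \<in> A \<Longrightarrow> f x \<in> B"
  unfolding rhom_def by blast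
lemma rhom_act: "rhom A s B t f \<Longrightarrow> x \<in> A \<Longrightarrow> f (s x r) = t (f x) r"
  unfolding rhom_def by blast

lemma rhom_zero: assumes "is_rmod A s" "rhom A s B t f" shows "f 0 = 0"
proof -
  have "f (0 + 0) = f 0 + f 0" using rhom_add_app[OF assms(2) rmod_closed(1)[OF assms(1)] rmod_closed(1)[OF assms(1)]] .
  thus ?thesis by simp
qed

lemma rhom_neg: assumes M: "is_rmod A s" and h: "rhom A s B t f" and x: "x \<in> A" shows "f (- x) = - f x"
proof -
  have "f (x + - x) = f x + f (-x)" using rhom_add_app[OF h x rmod_closed(3)[OF M x]] .
  hence "f x + f (-x) = 0" using rhom_zero[OF M h] by simp
  thus ?thesis by (rule add.inverse_unique[symmetric])
qed

lemma rhom_diff: assumes M: "is_rmod A s" and h: "rhom A s B t f" and x: "x \<in> A" and y: "y \<in> A"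
  shows "f (x - y) = f x - f y"
proof -
  have "f (x + - y) = f x + f (-y)" using rhom_add_app[OF h x rmod_closed(3)[OF M y]] .
  thus ?thesis using rhom_neg[OF M h y] by simp
qed

lemma rhom_comp: "rhom A s B t f \<Longrightarrow> rhom B t C u g \<Longrightarrow> rhom A s C u (\<lambda>x. g (f x))"
  unfolding rhom_def by auto

lemma rhom_mono_dom: "rhom A s B t f \<Longrightarrow> A' \<subseteq> A \<Longrightarrow> rhom A' s B t f"
  unfolding rhom_def by blast

lemma rhom_mono_cod: "rhom A s B t f \<Longrightarrow> B \<subseteq> B' \<Longrightarrow> rhom A s B' t f"
  unfolding rhom_def by blast

lemma rhom_cod: "rhom A s B t f \<Longrightarrow> (\<And>x. x \<in> A \<Longrightarrow> f x \<in> B') \<Longrightarrow> rhom A s B' t f"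
  unfolding rhom_def by blast

lemma rhom_image: "rhom A s B t f \<Longrightarrow> rhom A s (f ` A) t f"
  unfolding rhom_def by blast

lemma rhom_addf: assumes f: "rhom A s C t f" and g: "rhom A s C t g" and C: "is_rmod C t"
  shows "rhom A s C t (\<lambda>x. f x + g x)"
  unfolding rhom_def
proof (intro conjI ballI allI)
  fix x assume x: "x \<in> A"
  show "f x + g x \<in> C" using rhom_in[OF f x] rhom_in[OF g x] rmod_closed[OF C] by blast
  fix r show "f (s x r) + g (s x r) = t (f x + g x) r"
    using rhom_act[OF f x] rhom_act[OF g x] rhom_in[OF f x] rhom_in[OF g x] rmod_closed(5)[OF C] by simp
next
  fix x y assume x: "x \<in> A" and y: "y \<in> A"
  show "f (x + y) + g (x + y) = f x + g x + (f y + g y)"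
    using rhom_add_app[OF f x y] rhom_add_app[OF g x y] by (simp add: ac_simps)
qed

lemma rhom_uminusf: assumes f: "rhom A s C t f" and C: "is_rmod C t"
  shows "rhom A s C t (\<lambda>x. - f x)"
  unfolding rhom_def
proof (intro conjI ballI allI)
  fix x assume x: "x \<in> A"
  show "- f x \<in> C" using rhom_in[OF f x] rmod_closed[OF C] by blast
  fix r show "- f (s x r) = t (- f x) r"
    using rhom_act[OF f x, of r] rmod_neg_act[OF C rhom_in[OF f x], of r] by simp
next
  fix x y assume x: "x \<in> A" and y: "y \<in> A"
  show "- f (x + y) = - f x + - f y"
    using rhom_add_app[OF f x y] by (simp add: add.commute)
qed

lemma image_rmod: assumes M: "is_rmod A s" and f: "rhom A s B t f" shows "is_rmod (f ` A) t"
  unfolding is_rmod_def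
proof (intro conjI ballI allI)
  show "0 \<in> f ` A" using rhom_zero[OF M f] rmod_closed(1)[OF M] by (metis image_eqI)
next
  fix x y assume "x \<in> f ` A" "y \<in> f ` A"
  then obtain a b where a: "a \<in> A" "x = f a" and b: "b \<in> A" "y = f b" by blast
  have ab: "a + b \<in> A" using rmod_closed(2)[OF M a(1) b(1)] .
  have xy: "x + y = f (a + b)" using a b rhom_add_app[OF f a(1) b(1)] by simp
  show "x + y \<in> f ` A" using xy ab by (rule image_eqI)
  fix r show "t (x + y) r = t x r + t y r"
  proof -
    have "t (x + y) r = t (f (a + b)) r" using xy by simp
    also have "\<dots> = f (s (a + b) r)" using rhom_act[OF f ab] by simp
    also have "\<dots> = f (s a r + s b r)" using rmod_closed(5)[OF M a(1) b(1)] by simp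
    also have "\<dots> = f (s a r) + f (s b r)"
      using rhom_add_app[OF f rmod_closed(4)[OF M a(1)] rmod_closed(4)[OF M b(1)]] .
    also have "\<dots> = t x r + t y r" using a b rhom_act[OF f a(1)] rhom_act[OF f b(1)] by simp
    finally show ?thesis .
  qed
next
  fix x assume "x \<in> f ` A"
  then obtain a where a: "a \<in> A" "x = f a" by blast
  have "- x = f (- a)" using a rhom_neg[OF M f a(1)] by simp
  thus "- x \<in> f ` A" using rmod_closed(3)[OF M a(1)] by (rule image_eqI)
  fix r 
  have "t x r = f (s a r)" using a rhom_act[OF f a(1)] by simp
  thus "t x r \<in> f ` A" using rmod_closed(4)[OF M a(1)] by (rule image_eqI)
  have s1: "s a 1 = a" using M a(1) unfolding is_rmod_def by blast
  show "t x 1 = x" using a rhom_act[OF f a(1), of 1] s1 by simp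
  fix q
  have s2: "s a (r + q) = s a r + s a q" using M a(1) unfolding is_rmod_def by blast
  have "t x (r + q) = f (s a (r + q))" using a rhom_act[OF f a(1)] by simp
  also have "\<dots> = f (s a r) + f (s a q)" unfolding s2
    using rhom_add_app[OF f rmod_closed(4)[OF M a(1)] rmod_closed(4)[OF M a(1)]] .
  also have "\<dots> = t x r + t x q" using a rhom_act[OF f a(1)] by simp
  finally show "t x (r + q) = t x r + t x q" .
  have s3: "s a (r * q) = s (s a r) q" using M a(1) unfolding is_rmod_def by blast
  have "t x (r * q) = f (s (s a r) q)" using a rhom_act[OF f a(1), of "r*q"] s3 by simp
  also have "\<dots> = t (f (s a r)) q" using rhom_act[OF f rmod_closed(4)[OF M a(1)]] .
  also have "\<dots> = t (t x r) q" using a rhom_act[OF f a(1)] by simp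
  finally show "t x (r * q) = t (t x r) q" .
qed

lemma fin_gen_rmod: assumes M: "is_rmod A s" and g: "fin_gen A s B t" shows "is_rmod B t"
proof -
  obtain n f where f: "rhom (dsum n A) (dact s) B t f" "f ` dsum n A = B"
    using g unfolding fin_gen_def by blast
  show ?thesis using image_rmod[OF dsum_rmod[OF M] f(1)] f(2) by simp
qed

lemma fin_gen_image: assumes g: "fin_gen A s B t" and h: "rhom B t C u g" and e: "g ` B = C"
  shows "fin_gen A s C u"
proof -
  obtain n f where n: "n > 0" and f: "rhom (dsum n A) (dact s) B t f" "f ` dsum n A = B"
    using g unfolding fin_gen_def by blast
  have "rhom (dsum n A) (dact s) C u (\<lambda>x. g (f x))" using rhom_comp[OF f(1) h] .
  moreover have "(\<lambda>x. g (f x)) ` dsum n A = C" using f(2) e by (simp add: image_image[symmetric])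
  ultimately show ?thesis unfolding fin_gen_def using n by blast
qed

lemma fin_gen_hom_image: assumes M: "is_rmod A s" and f: "rhom (dsum n A) (dact s) C t f"
  shows "fin_gen A s (f ` dsum n A) t"
proof (cases "n = 0")
  case True
  have f0: "f 0 = 0" using rhom_zero[OF dsum_rmod[OF M] f] .
  have "0 \<in> dsum n A" using rmod_closed[OF dsum_rmod[OF M]] by blast
  hence t0: "t 0 r = 0" for r using rhom_act[OF f, of 0 r] f0 rmod_zero_act[OF dsum_rmod[OF M]] by metis
  have "rhom (dsum 1 A) (dact s) {0} t (\<lambda>_. 0)" unfolding rhom_def using t0 by auto
  moreover have "(\<lambda>_. 0) ` dsum 1 A = {0}" using rmod_closed[OF dsum_rmod[OF M]] by blast
  moreover have "f ` dsum n A = {0}" unfolding True dsum_0 using f0 by simp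
  ultimately show ?thesis unfolding fin_gen_def by (metis zero_less_one)
next
  case False
  thus ?thesis unfolding fin_gen_def using rhom_image[OF f] by blast
qed


definition lft :: "nat \<Rightarrow> (nat \<Rightarrow> 'a::zero) \<Rightarrow> nat \<Rightarrow> 'a" where
  "lft k x = (\<lambda>i. if i < k then x i else 0)"
definition rgt :: "nat \<Rightarrow> (nat \<Rightarrow> 'a) \<Rightarrow> nat \<Rightarrow> 'a" where
  "rgt k x = (\<lambda>i. x (i + k))"
definition cat :: "nat \<Rightarrow> (nat \<Rightarrow> 'a) \<Rightarrow> (nat \<Rightarrow> 'a) \<Rightarrow> nat \<Rightarrow> 'a" where
  "cat k u v = (\<lambda>i. if i < k then u i else v (i - k))"
definition sng :: "nat \<Rightarrow> 'a::zero \<Rightarrow> nat \<Rightarrow> 'a" where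
  "sng k a = (\<lambda>i. if i = k then a else 0)"

lemma lft_dsum: "0 \<in> A \<Longrightarrow> x \<in> dsum m A \<Longrightarrow> lft a x \<in> dsum a A"
  unfolding lft_def dsum_def using dsum_in[of x m A] by (auto simp: dsum_def)

lemma rgt_dsum: "x \<in> dsum (a + b) A \<Longrightarrow> rgt a x \<in> dsum b A"
  unfolding rgt_def dsum_def by auto

lemma cat_dsum: "u \<in> dsum a A \<Longrightarrow> v \<in> dsum b A \<Longrightarrow> cat a u v \<in> dsum (a + b) A"
  unfolding cat_def dsum_def by auto

lemma lft_cat: "u \<in> dsum a A \<Longrightarrow> lft a (cat a u v) = u"
  unfolding lft_def cat_def dsum_def by (auto simp: fun_eq_iff)

lemma rgt_cat: "rgt a (cat a u v) = v"
  unfolding rgt_def cat_def by (auto simp: fun_eq_iff)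

lemma sng_dsum: "0 \<in> A \<Longrightarrow> a \<in> A \<Longrightarrow> sng k a \<in> dsum (Suc k) A"
  unfolding sng_def dsum_def by auto

lemma split_Suc: "x \<in> dsum (Suc n) A \<Longrightarrow> x = lft n x + sng n (x n)"
  unfolding lft_def sng_def dsum_def by (auto simp: fun_eq_iff less_Suc_eq)

lemma rhom_lft: assumes M: "is_rmod A s" shows "rhom (dsum m A) (dact s) (dsum a A) (dact s) (lft a)"
  unfolding rhom_def
proof (intro conjI ballI allI)
  fix x assume x: "x \<in> dsum m A"
  show "lft a x \<in> dsum a A" using lft_dsum[OF rmod_closed(1)[OF M] x] .
  fix r show "lft a (dact s x r) = dact s (lft a x) r"
    unfolding lft_def dact_def using rmod_zero_act[OF M] by (auto simp: fun_eq_iff)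
next
  fix x y :: "nat \<Rightarrow> 'a"
  show "lft a (x + y) = lft a x + lft a y" unfolding lft_def by (auto simp: fun_eq_iff)
qed

lemma rhom_rgt: shows "rhom (dsum (a + b) A) (dact s) (dsum b A) (dact s) (rgt a)"
  unfolding rhom_def
proof (intro conjI ballI allI)
  fix x assume x: "x \<in> dsum (a + b) A"
  show "rgt a x \<in> dsum b A" using rgt_dsum[OF x] .
  fix r show "rgt a (dact s x r) = dact s (rgt a x) r"
    unfolding rgt_def dact_def by (auto simp: fun_eq_iff)
next
  fix x y :: "nat \<Rightarrow> 'a"
  show "rgt a (x + y) = rgt a x + rgt a y" unfolding rgt_def by (auto simp: fun_eq_iff)
qed

lemma rhom_sng: assumes M: "is_rmod A s" shows "rhom A s (dsum (Suc k) A) (dact s) (sng k)"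
  unfolding rhom_def
proof (intro conjI ballI allI)
  fix x assume x: "x \<in> A"
  show "sng k x \<in> dsum (Suc k) A" using sng_dsum[OF rmod_closed(1)[OF M] x] .
  fix r show "sng k (s x r) = dact s (sng k x) r"
    unfolding sng_def dact_def using rmod_zero_act[OF M] by (auto simp: fun_eq_iff)
next
  fix x y :: "'a"
  show "sng k (x + y) = sng k x + sng k y" unfolding sng_def by (auto simp: fun_eq_iff)
qed

lemma rhom_ev: assumes M: "is_rmod A s" shows "rhom (dsum n A) (dact s) A s (\<lambda>x. x k)"
  unfolding rhom_def dact_def using dsum_in[OF _ rmod_closed(1)[OF M]] by auto

lemma fin_gen_sum:
  assumes M: "is_rmod A s" and g1: "fin_gen A s B1 t" and g2: "fin_gen A s B2 t"
    and C: "is_rmod C t" and s1: "B1 \<subseteq> C" and s2: "B2 \<subseteq> C"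
  shows "fin_gen A s {x. \<exists>a\<in>B1. \<exists>b\<in>B2. x = a + b} t"
proof -
  obtain n1 f1 where n1: "n1 > 0" and f1: "rhom (dsum n1 A) (dact s) B1 t f1" "f1 ` dsum n1 A = B1"
    using g1 unfolding fin_gen_def by blast
  obtain n2 f2 where f2: "rhom (dsum n2 A) (dact s) B2 t f2" "f2 ` dsum n2 A = B2"
    using g2 unfolding fin_gen_def by blast
  define h where "h x = f1 (lft n1 x) + f2 (rgt n1 x)" for x
  have h1: "rhom (dsum (n1 + n2) A) (dact s) C t (\<lambda>x. f1 (lft n1 x))"
    using rhom_comp[OF rhom_lft[OF M] rhom_mono_cod[OF f1(1) s1]] .
  have h2: "rhom (dsum (n1 + n2) A) (dact s) C t (\<lambda>x. f2 (rgt n1 x))"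
    using rhom_comp[OF rhom_rgt rhom_mono_cod[OF f2(1) s2]] .
  have hh: "rhom (dsum (n1 + n2) A) (dact s) C t h"
    unfolding h_def using rhom_addf[OF h1 h2 C] .
  have img: "h ` dsum (n1 + n2) A = {x. \<exists>a\<in>B1. \<exists>b\<in>B2. x = a + b}"
  proof (intro equalityI subsetI)
    fix y assume "y \<in> h ` dsum (n1 + n2) A"
    then obtain x where x: "x \<in> dsum (n1 + n2) A" "y = h x" by blast
    have "f1 (lft n1 x) \<in> B1" using rhom_in[OF f1(1) lft_dsum[OF rmod_closed(1)[OF M] x(1)]] .
    moreover have "f2 (rgt n1 x) \<in> B2" using rhom_in[OF f2(1) rgt_dsum[OF x(1)]] .
    ultimately show "y \<in> {x. \<exists>a\<in>B1. \<exists>b\<in>B2. x = a + b}" using x(2) unfolding h_def by blast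
  next
    fix y assume "y \<in> {x. \<exists>a\<in>B1. \<exists>b\<in>B2. x = a + b}"
    then obtain a b where ab: "a \<in> B1" "b \<in> B2" "y = a + b" by blast
    obtain u where u: "u \<in> dsum n1 A" "a = f1 u" using ab(1) f1(2) by blast
    obtain v where v: "v \<in> dsum n2 A" "b = f2 v" using ab(2) f2(2) by blast
    have "h (cat n1 u v) = y" unfolding h_def using lft_cat[OF u(1), of v] rgt_cat[of n1 u v] u v ab by simp
    thus "y \<in> h ` dsum (n1 + n2) A" using cat_dsum[OF u(1) v(1)] by (metis image_eqI)
  qed
  show ?thesis unfolding fin_gen_def
    using rhom_image[OF hh] img n1 by (intro exI[of _ "n1 + n2"]) auto
qed


lemma rhom_zero_map: "is_rmod B t \<Longrightarrow> rhom A s B t (\<lambda>_. 0)"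
  unfolding rhom_def using rmod_closed(1)[of B t] rmod_zero_act[of B t] by auto

lemma lift:
  assumes M: "is_rmod A s" and ip: "intr_proj A s" and N: "submod N A s"
    and al: "rhom (dsum n A) (dact s) N s \<alpha>" and ae: "\<alpha> ` dsum n A = N"
    and be: "rhom (dsum m A) (dact s) N s \<beta>"
  shows "\<exists>\<gamma>. rhom (dsum m A) (dact s) (dsum n A) (dact s) \<gamma> \<and> (\<forall>z\<in>dsum m A. \<alpha> (\<gamma> z) = \<beta> z)"
proof (cases "n = 0")
  case True
  have a0: "\<alpha> 0 = 0" using rhom_zero[OF dsum_rmod[OF M] al] .
  have N0: "N = {0}" using ae a0 unfolding True dsum_0 by simp
  have "\<forall>z\<in>dsum m A. \<alpha> 0 = \<beta> z" using rhom_in[OF be] N0 a0 by simp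
  thus ?thesis using rhom_zero_map[OF dsum_rmod[OF M]] by blast
next
  case False
  hence n: "n > 0" by simp
  have Mn: "is_rmod (dsum n A) (dact s)" using dsum_rmod[OF M] .
  have z: "0 \<in> A" using rmod_closed(1)[OF M] .
  show ?thesis using be
  proof (induction m arbitrary: \<beta>)
    case 0
    have "\<beta> 0 = 0" using rhom_zero[OF dsum_rmod[OF M] "0.prems"] .
    moreover have "\<alpha> 0 = 0" using rhom_zero[OF Mn al] .
    ultimately have "\<forall>z\<in>dsum 0 A. \<alpha> 0 = \<beta> z" unfolding dsum_0 by simp
    thus ?case using rhom_zero_map[OF Mn] by blast
  next
    case (Suc m)
    have b': "rhom (dsum m A) (dact s) N s \<beta>" using rhom_mono_dom[OF Suc.prems dsum_mono[OF z]] .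
    obtain \<gamma>' where g': "rhom (dsum m A) (dact s) (dsum n A) (dact s) \<gamma>'"
      "\<forall>z\<in>dsum m A. \<alpha> (\<gamma>' z) = \<beta> z" using Suc.IH[OF b'] by blast
    have b1: "rhom A s N s (\<lambda>a. \<beta> (sng m a))" using rhom_comp[OF rhom_sng[OF M] Suc.prems] .
    obtain \<gamma>1 where g1: "rhom A s (dsum n A) (dact s) \<gamma>1" "\<forall>x\<in>A. \<alpha> (\<gamma>1 x) = \<beta> (sng m x)"
      using ip n N al ae b1 unfolding intr_proj_def by blast
    define \<gamma> where "\<gamma> z = \<gamma>' (lft m z) + \<gamma>1 (z m)" for z
    have r1: "rhom (dsum (Suc m) A) (dact s) (dsum n A) (dact s) (\<lambda>z. \<gamma>' (lft m z))"
      using rhom_comp[OF rhom_lft[OF M] g'(1)] .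
    have r2: "rhom (dsum (Suc m) A) (dact s) (dsum n A) (dact s) (\<lambda>z. \<gamma>1 (z m))"
      using rhom_comp[OF rhom_ev[OF M] g1(1)] .
    have rg: "rhom (dsum (Suc m) A) (dact s) (dsum n A) (dact s) \<gamma>"
      unfolding \<gamma>_def using rhom_addf[OF r1 r2 Mn] .
    have eq: "\<alpha> (\<gamma> z) = \<beta> z" if zz: "z \<in> dsum (Suc m) A" for z
    proof -
      have l: "lft m z \<in> dsum m A" using lft_dsum[OF z zz] .
      have l': "lft m z \<in> dsum (Suc m) A" using dsum_mono[OF z] l by blast
      have zm: "z m \<in> A" using dsum_in[OF zz z] .
      have sg: "sng m (z m) \<in> dsum (Suc m) A" using sng_dsum[OF z zm] .
      have "\<alpha> (\<gamma> z) = \<alpha> (\<gamma>' (lft m z)) + \<alpha> (\<gamma>1 (z m))" unfolding \<gamma>_def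
        using rhom_add_app[OF al rhom_in[OF g'(1) l] rhom_in[OF g1(1) zm]] .
      also have "\<dots> = \<beta> (lft m z) + \<beta> (sng m (z m))" using g'(2) l g1(2) zm by simp
      also have "\<dots> = \<beta> (lft m z + sng m (z m))" using rhom_add_app[OF Suc.prems l' sg, symmetric] .
      also have "\<dots> = \<beta> z" using split_Suc[OF zz] by simp
      finally show ?thesis .
    qed
    show ?case using rg eq by blast
  qed
qed


lemma dsum1: "dsum 1 A = dsum (Suc 0) A" by simp

lemma sng_ev: "sng k a k = a" unfolding sng_def by simp

lemma sng_diff: "sng k (a - b) = sng k a - sng k (b::'a::ab_group_add)"
  unfolding sng_def by (auto simp: fun_eq_iff)

lemma grp_id: "((g::'g::ab_group_add) + e) + (l - g) + (d - e) = l + d"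
  by (simp add: algebra_simps)

lemma grp_id2: "(a::'g::ab_group_add) + - b = 0 \<Longrightarrow> a = b"
proof -
  assume h: "a + - b = 0"
  have "- a = - b" using add.inverse_unique[OF h] .
  thus "a = b" by simp
qed

lemma fin_gen_self: assumes M: "is_rmod A s" shows "fin_gen A s A s"
proof -
  have r: "rhom (dsum 1 A) (dact s) A s (\<lambda>x. x 0)" using rhom_ev[OF M] .
  have "(\<lambda>x. x 0) ` dsum 1 A = A"
  proof (intro equalityI subsetI)
    fix y assume "y \<in> (\<lambda>x. x 0) ` dsum 1 A" thus "y \<in> A" using rhom_in[OF r] by blast
  next
    fix y assume y: "y \<in> A"
    have "sng 0 y \<in> dsum 1 A" using sng_dsum[OF rmod_closed(1)[OF M] y] by simp
    thus "y \<in> (\<lambda>x. x 0) ` dsum 1 A" by (rule image_eqI[where x="sng 0 y", rotated]) (simp add: sng_ev)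
  qed
  thus ?thesis unfolding fin_gen_def using r by (intro exI[of _ 1]) auto
qed

lemma dir1_endo: assumes M: "is_rmod A s" and co: "coherent A s A s" and ph: "rhom A s A s \<phi>"
  shows "fin_gen A s {x \<in> A. \<phi> x = 0} s"
proof -
  have r: "rhom (dsum 1 A) (dact s) A s (\<lambda>x. \<phi> (x 0))" using rhom_comp[OF rhom_ev[OF M] ph] .
  have K: "fin_gen A s {x \<in> dsum 1 A. \<phi> (x 0) = 0} (dact s)"
    using co r unfolding coherent_def by auto
  have g: "rhom {x \<in> dsum 1 A. \<phi> (x 0) = 0} (dact s) {x \<in> A. \<phi> x = 0} s (\<lambda>x. x 0)"
    by (rule rhom_cod[OF rhom_mono_dom[OF rhom_ev[OF M]]]) (auto intro: rhom_in[OF rhom_ev[OF M]])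
  have "(\<lambda>x. x 0) ` {x \<in> dsum 1 A. \<phi> (x 0) = 0} = {x \<in> A. \<phi> x = 0}"
  proof (intro equalityI subsetI)
    fix y assume "y \<in> (\<lambda>x. x 0) ` {x \<in> dsum 1 A. \<phi> (x 0) = 0}"
    thus "y \<in> {x \<in> A. \<phi> x = 0}" using rhom_in[OF rhom_ev[OF M]] by blast
  next
    fix y assume y: "y \<in> {x \<in> A. \<phi> x = 0}"
    have "sng 0 y \<in> {x \<in> dsum 1 A. \<phi> (x 0) = 0}"
      using sng_dsum[OF rmod_closed(1)[OF M], of y 0] y by (simp add: sng_ev)
    thus "y \<in> (\<lambda>x. x 0) ` {x \<in> dsum 1 A. \<phi> (x 0) = 0}"
      by (rule image_eqI[where x="sng 0 y", rotated]) (simp add: sng_ev)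
  qed
  thus ?thesis using fin_gen_image[OF K g] by blast
qed

lemma dir1_int: assumes M: "is_rmod A s" and co: "coherent A s A s"
  and N1: "submod N1 A s" and N2: "submod N2 A s" and g1: "fin_gen A s N1 s" and g2: "fin_gen A s N2 s"
  shows "fin_gen A s (N1 \<inter> N2) s"
proof -
  obtain n1 f1 where n1: "n1 > 0" and f1: "rhom (dsum n1 A) (dact s) N1 s f1" "f1 ` dsum n1 A = N1"
    using g1 unfolding fin_gen_def by blast
  obtain n2 f2 where f2: "rhom (dsum n2 A) (dact s) N2 s f2" "f2 ` dsum n2 A = N2"
    using g2 unfolding fin_gen_def by blast
  have s1: "N1 \<subseteq> A" and s2: "N2 \<subseteq> A" using N1 N2 unfolding submod_def by auto
  define \<rho> where "\<rho> x = f1 (lft n1 x) + - f2 (rgt n1 x)" for x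
  have h1: "rhom (dsum (n1 + n2) A) (dact s) N1 s (\<lambda>x. f1 (lft n1 x))"
    using rhom_comp[OF rhom_lft[OF M] f1(1)] .
  have h2: "rhom (dsum (n1 + n2) A) (dact s) A s (\<lambda>x. f2 (rgt n1 x))"
    using rhom_comp[OF rhom_rgt rhom_mono_cod[OF f2(1) s2]] .
  have rr: "rhom (dsum (n1 + n2) A) (dact s) A s \<rho>"
    unfolding \<rho>_def using rhom_addf[OF rhom_mono_cod[OF h1 s1] rhom_uminusf[OF h2 M] M] .
  define K where "K = {x \<in> dsum (n1 + n2) A. \<rho> x = 0}"
  have K: "fin_gen A s K (dact s)" using co rr n1 unfolding coherent_def K_def by auto
  have eq: "f1 (lft n1 x) = f2 (rgt n1 x)" if "x \<in> K" for x
    using that grp_id2 unfolding K_def \<rho>_def by blast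
  have g: "rhom K (dact s) (N1 \<inter> N2) s (\<lambda>x. f1 (lft n1 x))"
  proof (rule rhom_cod[OF rhom_mono_dom[OF h1]])
    show "K \<subseteq> dsum (n1 + n2) A" unfolding K_def by blast
  next
    fix x assume x: "x \<in> K"
    hence xx: "x \<in> dsum (n1 + n2) A" unfolding K_def by blast
    show "f1 (lft n1 x) \<in> N1 \<inter> N2"
      using rhom_in[OF h1 xx] rhom_in[OF f2(1) rgt_dsum[OF xx]] eq[OF x] by simp
  qed
  have "(\<lambda>x. f1 (lft n1 x)) ` K = N1 \<inter> N2"
  proof (intro equalityI subsetI)
    fix y assume "y \<in> (\<lambda>x. f1 (lft n1 x)) ` K" thus "y \<in> N1 \<inter> N2" using rhom_in[OF g] by blast
  next
    fix y assume y: "y \<in> N1 \<inter> N2"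
    obtain u where u: "u \<in> dsum n1 A" "y = f1 u" using y f1(2) by blast
    obtain v where v: "v \<in> dsum n2 A" "y = f2 v" using y f2(2) by blast
    have c: "cat n1 u v \<in> dsum (n1 + n2) A" using cat_dsum[OF u(1) v(1)] .
    have "\<rho> (cat n1 u v) = 0" unfolding \<rho>_def using lft_cat[OF u(1), of v] rgt_cat[of n1 u v] u v by simp
    hence "cat n1 u v \<in> K" using c unfolding K_def by blast
    thus "y \<in> (\<lambda>x. f1 (lft n1 x)) ` K"
      by (rule image_eqI[where x="cat n1 u v", rotated]) (simp add: lft_cat[OF u(1)] u)
  qed
  thus ?thesis using fin_gen_image[OF K g] by blast
qed


lemma submod_image: assumes M: "is_rmod A s" and f: "rhom B t A s f" and B: "is_rmod B t"
  shows "submod (f ` B) A s"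
  unfolding submod_def using image_rmod[OF B f] rhom_in[OF f] by blast

lemma ker0: assumes M: "is_rmod A s" and r: "rhom (dsum 0 A) (dact s) A s \<rho>"
  shows "fin_gen A s {x \<in> dsum 0 A. \<rho> x = 0} (dact s)"
proof -
  have e: "{x \<in> dsum 0 A. \<rho> x = 0} = {0}"
    using rhom_zero[OF dsum_rmod[OF M] r] unfolding dsum_0 by auto
  have z: "rhom (dsum 1 A) (dact s) (dsum 0 A) (dact s) (\<lambda>_. 0)" using rhom_zero_map[OF dsum_rmod[OF M]] .
  have "(\<lambda>_. 0) ` dsum 1 A = ({0} :: (nat \<Rightarrow> 'a) set)"
    using rmod_closed(1)[OF dsum_rmod[OF M], of 1] by blast
  thus ?thesis using fin_gen_hom_image[OF M z] e by simp
qed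

lemma dir2:
  assumes M: "is_rmod A s" and ip: "intr_proj A s"
    and hI: "\<forall>N1 N2. submod N1 A s \<and> submod N2 A s \<and> fin_gen A s N1 s \<and> fin_gen A s N2 s
        \<longrightarrow> fin_gen A s (N1 \<inter> N2) s"
    and hK: "\<forall>\<phi>. rhom A s A s \<phi> \<longrightarrow> fin_gen A s {x \<in> A. \<phi> x = 0} s"
  shows "rhom (dsum n A) (dact s) A s \<rho> \<Longrightarrow> fin_gen A s {x \<in> dsum n A. \<rho> x = 0} (dact s)"
proof (induction n arbitrary: \<rho>)
  case 0 thus ?case using ker0[OF M] by blast
next
  case (Suc n)
  note rho = Suc.prems
  have z: "0 \<in> A" using rmod_closed(1)[OF M] .
  have Mn: "is_rmod (dsum n A) (dact s)" using dsum_rmod[OF M] .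
  have MS: "is_rmod (dsum (Suc n) A) (dact s)" using dsum_rmod[OF M] .
  have M1: "is_rmod (dsum (Suc 0) A) (dact s)" using dsum_rmod[OF M] .
  have dm: "dsum n A \<subseteq> dsum (Suc n) A" using dsum_mono[OF z] .
  have rho1: "rhom (dsum n A) (dact s) A s \<rho>" using rhom_mono_dom[OF rho dm] .
  define K1 where "K1 = {x \<in> dsum n A. \<rho> x = 0}"
  have gK1: "fin_gen A s K1 (dact s)" unfolding K1_def using Suc.IH[OF rho1] .
  define \<phi> where "\<phi> a = \<rho> (sng n a)" for a
  have ph: "rhom A s A s \<phi>" unfolding \<phi>_def using rhom_comp[OF rhom_sng[OF M] rho] .
  define K2 where "K2 = {x \<in> A. \<phi> x = 0}"
  have gK2: "fin_gen A s K2 s" unfolding K2_def using hK ph by blast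
  define N1 where "N1 = \<rho> ` dsum n A"
  define N2 where "N2 = \<phi> ` A"
  have sN1: "submod N1 A s" unfolding N1_def using submod_image[OF M rho1 Mn] .
  have sN2: "submod N2 A s" unfolding N2_def using submod_image[OF M ph M] .
  have gN1: "fin_gen A s N1 s" unfolding N1_def using fin_gen_hom_image[OF M rho1] .
  have gN2: "fin_gen A s N2 s" unfolding N2_def
    using fin_gen_image[OF fin_gen_self[OF M] rhom_image[OF ph]] by blast
  have gI: "fin_gen A s (N1 \<inter> N2) s" using hI sN1 sN2 gN1 gN2 by blast
  then obtain m \<alpha> where m: "m > 0" and al: "rhom (dsum m A) (dact s) (N1 \<inter> N2) s \<alpha>"
    and ae: "\<alpha> ` dsum m A = N1 \<inter> N2" unfolding fin_gen_def by blast
  have N2m: "is_rmod N2 s" using sN2 unfolding submod_def by blast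
  obtain \<gamma> where g: "rhom (dsum m A) (dact s) (dsum n A) (dact s) \<gamma>" "\<forall>z\<in>dsum m A. \<rho> (\<gamma> z) = \<alpha> z"
  proof -
    have r1N: "rhom (dsum n A) (dact s) N1 s \<rho>" unfolding N1_def using rhom_image[OF rho1] .
    have N1e: "\<rho> ` dsum n A = N1" unfolding N1_def ..
    have aN1: "rhom (dsum m A) (dact s) N1 s \<alpha>" using rhom_mono_cod[OF al Int_lower1] .
    show ?thesis using lift[OF M ip sN1 r1N N1e aN1] that by blast
  qed
  define \<psi> where "\<psi> f = \<phi> (f 0)" for f :: "nat \<Rightarrow> 'a"
  have ps: "rhom (dsum (Suc 0) A) (dact s) N2 s \<psi>"
    unfolding \<psi>_def N2_def by (rule rhom_cod[OF rhom_comp[OF rhom_ev[OF M] ph]])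
      (use dsum_in[OF _ z] in blast)
  have pse: "\<psi> ` dsum (Suc 0) A = N2"
  proof (intro equalityI subsetI)
    fix y assume "y \<in> \<psi> ` dsum (Suc 0) A" thus "y \<in> N2" using rhom_in[OF ps] by blast
  next
    fix y assume "y \<in> N2"
    then obtain a where a: "a \<in> A" "y = \<phi> a" unfolding N2_def by blast
    have "sng 0 a \<in> dsum (Suc 0) A" using sng_dsum[OF z a(1)] .
    thus "y \<in> \<psi> ` dsum (Suc 0) A"
      by (rule image_eqI[where x="sng 0 a", rotated]) (simp add: \<psi>_def sng_ev a)
  qed
  have mal: "rhom (dsum m A) (dact s) N2 s (\<lambda>z. - \<alpha> z)"
    using rhom_uminusf[OF rhom_mono_cod[OF al Int_lower2] N2m] .
  obtain \<delta> where d: "rhom (dsum m A) (dact s) (dsum (Suc 0) A) (dact s) \<delta>"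
    "\<forall>z\<in>dsum m A. \<psi> (\<delta> z) = - \<alpha> z"
    using lift[OF M ip sN2 ps pse mal] by blast
  define \<Phi> where "\<Phi> z = \<gamma> z + sng n (\<delta> z 0)" for z
  have d0: "rhom (dsum m A) (dact s) A s (\<lambda>z. \<delta> z 0)" using rhom_comp[OF d(1) rhom_ev[OF M]] .
  have Ph: "rhom (dsum m A) (dact s) (dsum (Suc n) A) (dact s) \<Phi>"
    unfolding \<Phi>_def using rhom_addf[OF rhom_mono_cod[OF g(1) dm] rhom_comp[OF d0 rhom_sng[OF M]] MS] .
  have Phz: "\<rho> (\<Phi> z) = 0" if zz: "z \<in> dsum m A" for z
  proof -
    have "\<rho> (\<Phi> z) = \<rho> (\<gamma> z) + \<phi> (\<delta> z 0)" unfolding \<Phi>_def \<phi>_def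
      using rhom_add_app[OF rho rhom_in[OF rhom_mono_cod[OF g(1) dm] zz] rhom_in[OF rhom_comp[OF d0 rhom_sng[OF M]] zz]] .
    also have "\<dots> = \<alpha> z + - \<alpha> z" using g(2) d(2) zz unfolding \<psi>_def by simp
    finally show ?thesis by simp
  qed
  define K where "K = {x \<in> dsum (Suc n) A. \<rho> x = 0}"
  define S1 where "S1 = \<Phi> ` dsum m A"
  define S3 where "S3 = sng n ` K2"
  have gS1: "fin_gen A s S1 (dact s)" unfolding S1_def using fin_gen_hom_image[OF M Ph] .
  have K2A: "K2 \<subseteq> A" unfolding K2_def by blast
  have gS3: "fin_gen A s S3 (dact s)" unfolding S3_def
    using fin_gen_image[OF gK2 rhom_image[OF rhom_mono_dom[OF rhom_sng[OF M] K2A]]] by blast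
  have S1C: "S1 \<subseteq> dsum (Suc n) A" unfolding S1_def using rhom_in[OF Ph] by blast
  have K1C: "K1 \<subseteq> dsum (Suc n) A" unfolding K1_def using dm by blast
  have S3C: "S3 \<subseteq> dsum (Suc n) A" unfolding S3_def using rhom_in[OF rhom_sng[OF M]] K2A by blast
  define S12 where "S12 = {x. \<exists>a\<in>S1. \<exists>b\<in>K1. x = a + b}"
  have gS12: "fin_gen A s S12 (dact s)" unfolding S12_def using fin_gen_sum[OF M gS1 gK1 MS S1C K1C] .
  have S12C: "S12 \<subseteq> dsum (Suc n) A" unfolding S12_def using S1C K1C rmod_closed(2)[OF MS] by blast
  define S where "S = {x. \<exists>a\<in>S12. \<exists>b\<in>S3. x = a + b}"
  have gS: "fin_gen A s S (dact s)" unfolding S_def using fin_gen_sum[OF M gS12 gS3 MS S12C S3C] .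
  have "K = S"
  proof (intro equalityI subsetI)
    fix x assume xK: "x \<in> K"
    hence xx: "x \<in> dsum (Suc n) A" and rx: "\<rho> x = 0" unfolding K_def by auto
    define l where "l = lft n x"
    define d where "d = x n"
    have l: "l \<in> dsum n A" unfolding l_def using lft_dsum[OF z xx] .
    have dA: "d \<in> A" unfolding d_def using dsum_in[OF xx z] .
    have xs: "x = l + sng n d" unfolding l_def d_def using split_Suc[OF xx] .
    have "\<rho> x = \<rho> l + \<phi> d" unfolding xs \<phi>_def
      using rhom_add_app[OF rho rhom_in[OF rhom_mono_cod[OF rhom_lft[OF M] dm] xx, folded l_def]
         rhom_in[OF rhom_sng[OF M] dA]] .
    hence s0: "\<rho> l + \<phi> d = 0" using rx by simp
    hence "\<rho> l = - \<phi> d" by (simp add: eq_neg_iff_add_eq_0)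
    also have "\<dots> = \<phi> (- d)" using rhom_neg[OF M ph dA] by simp
    finally have "\<rho> l \<in> N2" unfolding N2_def using rmod_closed(3)[OF M dA] by blast
    moreover have "\<rho> l \<in> N1" unfolding N1_def using l by blast
    ultimately have "\<rho> l \<in> \<alpha> ` dsum m A" using ae by blast
    then obtain zz where zz: "zz \<in> dsum m A" "\<rho> l = \<alpha> zz" by blast
    have gz: "\<gamma> zz \<in> dsum n A" using rhom_in[OF g(1) zz(1)] .
    define b where "b = l - \<gamma> zz"
    have bK: "b \<in> K1" unfolding K1_def b_def
      using rmod_diff[OF Mn l gz] rhom_diff[OF Mn rho1 l gz] g(2) zz by simp
    have dz: "\<delta> zz 0 \<in> A" using rhom_in[OF d0 zz(1)] .
    define e where "e = d - \<delta> zz 0"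
    have eA: "e \<in> A" unfolding e_def using rmod_diff[OF M dA dz] .
    have "\<phi> e = \<phi> d - \<phi> (\<delta> zz 0)" unfolding e_def using rhom_diff[OF M ph dA dz] .
    also have "\<phi> (\<delta> zz 0) = - \<alpha> zz" using d(2) zz(1) unfolding \<psi>_def by simp
    finally have "\<phi> e = \<phi> d + \<rho> l" using zz(2) by simp
    hence "\<phi> e = 0" using s0 by (simp add: add.commute)
    hence eK: "e \<in> K2" unfolding K2_def using eA by blast
    have "x = (\<gamma> zz + sng n (\<delta> zz 0)) + b + sng n e"
      unfolding xs b_def e_def sng_diff using grp_id[symmetric] .
    moreover have "\<Phi> zz \<in> S1" unfolding S1_def using zz(1) by blast
    moreover have "sng n e \<in> S3" unfolding S3_def using eK by blast
    ultimately show "x \<in> S" unfolding S_def S12_def \<Phi>_def using bK by blast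
  next
    fix x assume "x \<in> S"
    then obtain a b c where a: "a \<in> S1" and b: "b \<in> K1" and c: "c \<in> S3" and x: "x = a + b + c"
      unfolding S_def S12_def by blast
    have aC: "a \<in> dsum (Suc n) A" and bC: "b \<in> dsum (Suc n) A" and cC: "c \<in> dsum (Suc n) A"
      using a b c S1C K1C S3C by blast+
    have abC: "a + b \<in> dsum (Suc n) A" using rmod_closed(2)[OF MS aC bC] .
    have ra: "\<rho> a = 0" using a Phz unfolding S1_def by blast
    have rb: "\<rho> b = 0" using b unfolding K1_def by blast
    obtain e where e: "e \<in> K2" "c = sng n e" using c unfolding S3_def by blast
    have rc: "\<rho> c = 0" using e unfolding K2_def \<phi>_def by simp
    have "\<rho> x = \<rho> (a + b) + \<rho> c" unfolding x using rhom_add_app[OF rho abC cC] .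
    also have "\<rho> (a + b) = \<rho> a + \<rho> b" using rhom_add_app[OF rho aC bC] .
    finally have "\<rho> x = \<rho> a + \<rho> b + \<rho> c" .
    hence "\<rho> x = 0" using ra rb rc by simp
    moreover have "x \<in> dsum (Suc n) A" unfolding x using rmod_closed(2)[OF MS abC cC] .
    ultimately show "x \<in> K" unfolding K_def by blast
  qed
  thus ?case using gS unfolding K_def by simp
qed


theorem mainTheorem13:
  fixes A :: "'m::ab_group_add set" and s :: "'m \<Rightarrow> 'r::ring_1 \<Rightarrow> 'm"
  assumes "is_rmod A s"
  defines "cond_ii \<equiv>
     (\<forall>N1 N2. submod N1 A s \<and> submod N2 A s \<and> fin_gen A s N1 s \<and> fin_gen A s N2 s
        \<longrightarrow> fin_gen A s (N1 \<inter> N2) s)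
     \<and> (\<forall>\<phi>. rhom A s A s \<phi> \<longrightarrow> fin_gen A s {x \<in> A. \<phi> x = 0} s)"
  shows "(coherent A s A s \<longrightarrow> cond_ii)
    \<and> (intr_proj A s \<longrightarrow> (coherent A s A s \<longleftrightarrow> cond_ii))"
proof -
  note M = assms(1)
  have i2: "cond_ii" if co: "coherent A s A s"
    unfolding cond_ii_def using dir1_int[OF M co] dir1_endo[OF M co] by blast
  have i1: "coherent A s A s" if ip: "intr_proj A s" and c: "cond_ii"
  proof -
    have hI: "\<forall>N1 N2. submod N1 A s \<and> submod N2 A s \<and> fin_gen A s N1 s \<and> fin_gen A s N2 s
        \<longrightarrow> fin_gen A s (N1 \<inter> N2) s" and hK: "\<forall>\<phi>. rhom A s A s \<phi> \<longrightarrow> fin_gen A s {x \<in> A. \<phi> x = 0} s"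
      using c unfolding cond_ii_def by blast+
    show ?thesis unfolding coherent_def using fin_gen_self[OF M] dir2[OF M ip hI hK] by blast
  qed
  show ?thesis using i1 i2 by blast
qed

end
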